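(* Let $a,b$ be positive integers and $c$ an integer with $-b<c<a$, let $d=\gcd(a,b,c)$, $a'=a/d$, $b'=b/d$, $c'=c/d$, $d'=\gcd(a',b')$, and let $k\in\mathbb{N}\cup\{\infty\}$ with $k\geq d'-1$. If $S$ is a basis (generating set as a $T_{\mathbb{Z}}$-ideal) for $T_{\mathbb{Z}}(E_{(-b',c',a')}^{(\infty,k,\infty)})$, then the $T_{\mathbb{Z}}$-ideal $T_{\mathbb{Z}}(E_{(-b,c,a)}^{(\infty,k,\infty)})$ is generated by $S'\cup N$, where $S'=\{\Psi_d(\Phi_d(f)) : f\in S\}$ and $N=\{x_i^m\in X: m\notin d\mathbb{Z}\}$.
   Context: $F$ is a field of characteristic zero; $E$ is the Grassmann algebra of an infinite-dimensional $F$-vector space with basis $e_1,e_2,\dots$. For pairwise distinct integers $r_1,\dots,r_n$ and $v_j\in\mathbb{N}\cup\{\infty\}$, $E_{(r_1,\dots,r_n)}^{(v_1,\dots,v_n)}$ is the $\mathbb{Z}$-grading obtained by splitting $\{e_i\}$ into $n$ disjoint sets of cardinalities $v_1,\dots,v_n$, giving elements of the $j$-th set degree $r_j$ and monomials the sum of degrees. For a group $G$, $F\langle X|G\rangle$ is the free associative algebra on variables $x_i^g$ of degree $g$; $X$ is the set of variables; $T_G(A)$ is the ideal of graded identities of a $G$-graded algebra $A$; a $T_G$-ideal is an ideal invariant under degree-preserving endomorphisms. $\Phi_d:F\langle X|\mathbb{Z}\rangle\to F\langle X|d\mathbb{Z}\rangle$ is the isomorphism $x_i^n\mapsto x_i^{dn}$,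 and $\Psi_d:F\langle X|d\mathbb{Z}\rangle\to F\langle X|\mathbb{Z}\rangle$ is the homomorphism $x_i^{dn}\mapsto x_i^{dn}$. *)

theory Defs
  imports Main "HOL-Library.Extended_Nat"
begin

text \<open>A variable x_i^g is encoded as the pair (i, g) :: nat \<times> int (index i, degree g).
  Elements of F<X|Z> are functions from words (monomials) to coefficients; the
  elements of the free algebra are those with finite support.\<close>

type_synonym gvar = "nat \<times> int"
type_synonym 'a fpoly = "gvar list \<Rightarrow> 'a"

definition fsupp :: "'a::zero fpoly \<Rightarrow> gvar list set" where
  "fsupp f = {w. f w \<noteq> 0}"

definition ffin :: "'a::zero fpoly \<Rightarrow> bool" where
  "ffin f \<longleftrightarrow> finite (fsupp f)"

definition fmono :: "gvar list \<Rightarrow> 'a::{zero,one} fpoly" where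
  "fmono w = (\<lambda>u. if u = w then 1 else 0)"

definition fvar :: "gvar \<Rightarrow> 'a::{zero,one} fpoly" where
  "fvar x = fmono [x]"

definition fadd :: "'a::plus fpoly \<Rightarrow> 'a fpoly \<Rightarrow> 'a fpoly" where
  "fadd p q = (\<lambda>w. p w + q w)"

definition fsmult :: "'a::times \<Rightarrow> 'a fpoly \<Rightarrow> 'a fpoly" where
  "fsmult c p = (\<lambda>w. c * p w)"

definition fmult :: "'a::comm_semiring_1 fpoly \<Rightarrow> 'a fpoly \<Rightarrow> 'a fpoly" where
  "fmult p q = (\<lambda>w. \<Sum>i\<le>length w. p (take i w) * q (drop i w))"

definition fwordprod :: "(gvar \<Rightarrow> 'a::comm_semiring_1 fpoly) \<Rightarrow> gvar list \<Rightarrow> 'a fpoly" where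
  "fwordprod s w = foldr (\<lambda>x acc. fmult (s x) acc) w (fmono [])"

definition fsubst :: "(gvar \<Rightarrow> 'a::comm_semiring_1 fpoly) \<Rightarrow> 'a fpoly \<Rightarrow> 'a fpoly" where
  "fsubst s f = (\<lambda>u. \<Sum>w\<in>fsupp f. f w * fwordprod s w u)"

definition fhomog :: "int \<Rightarrow> 'a::zero fpoly \<Rightarrow> bool" where
  "fhomog g p \<longleftrightarrow> (\<forall>w. p w \<noteq> 0 \<longrightarrow> sum_list (map snd w) = g)"

definition graded_endo_subst :: "(gvar \<Rightarrow> 'a::comm_semiring_1 fpoly) \<Rightarrow> bool" where
  "graded_endo_subst s \<longleftrightarrow> (\<forall>x. ffin (s x) \<and> fhomog (snd x) (s x))"

definition is_ideal :: "'a::comm_semiring_1 fpoly set \<Rightarrow> bool" where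
  "is_ideal I \<longleftrightarrow> I \<subseteq> {f. ffin f} \<and> (\<lambda>_. 0) \<in> I
     \<and> (\<forall>p\<in>I. \<forall>q\<in>I. fadd p q \<in> I)
     \<and> (\<forall>p\<in>I. \<forall>c. fsmult c p \<in> I)
     \<and> (\<forall>p\<in>I. \<forall>q. ffin q \<longrightarrow> fmult q p \<in> I \<and> fmult p q \<in> I)"

definition is_TZ_ideal :: "'a::comm_semiring_1 fpoly set \<Rightarrow> bool" where
  "is_TZ_ideal I \<longleftrightarrow> is_ideal I \<and> (\<forall>s. graded_endo_subst s \<longrightarrow> (\<forall>f\<in>I. fsubst s f \<in> I))"

definition TZ_gen :: "'a::comm_semiring_1 fpoly set \<Rightarrow> 'a fpoly set" where
  "TZ_gen S = \<Inter>{I. is_TZ_ideal I \<and> S \<subseteq> I}"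

text \<open>An element of E is a function assigning to each finite set A = {i1 < ... < ik}
  the coefficient of the monomial e_i1 ... e_ik; only finitely many nonzero coefficients,
  and only on finite sets.\<close>

type_synonym 'a grass = "nat set \<Rightarrow> 'a"

definition grass_elem :: "'a::zero grass \<Rightarrow> bool" where
  "grass_elem x \<longleftrightarrow> finite {A. x A \<noteq> 0} \<and> (\<forall>A. x A \<noteq> 0 \<longrightarrow> finite A)"

definition gsign :: "nat set \<Rightarrow> nat set \<Rightarrow> 'a::comm_ring_1" where
  "gsign A B = (-1) ^ card {(p, q). p \<in> A \<and> q \<in> B \<and> q < p}"

text \<open>(e_A)(e_B) = sign(A,B) e_(A \<union> B) if A, B are disjoint, and 0 otherwise.\<close>
definition gmult :: "'a::comm_ring_1 grass \<Rightarrow> 'a grass \<Rightarrow> 'a grass" where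
  "gmult x y = (\<lambda>C. if finite C then (\<Sum>A\<in>Pow C. gsign A (C - A) * x A * y (C - A)) else 0)"

definition gone :: "'a::{zero,one} grass" where
  "gone = (\<lambda>A. if A = {} then 1 else 0)"

definition gwordprod :: "(gvar \<Rightarrow> 'a::comm_ring_1 grass) \<Rightarrow> gvar list \<Rightarrow> 'a grass" where
  "gwordprod \<phi> w = foldr (\<lambda>x acc. gmult (\<phi> x) acc) w gone"

definition geval :: "(gvar \<Rightarrow> 'a::comm_ring_1 grass) \<Rightarrow> 'a fpoly \<Rightarrow> 'a grass" where
  "geval \<phi> f = (\<lambda>C. \<Sum>w\<in>fsupp f. f w * gwordprod \<phi> w C)"

definition ghomog :: "(nat \<Rightarrow> int) \<Rightarrow> int \<Rightarrow> 'a::zero grass \<Rightarrow> bool" where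
  "ghomog deg g x \<longleftrightarrow> (\<forall>A. x A \<noteq> 0 \<longrightarrow> (\<Sum>i\<in>A. deg i) = g)"

definition TZ_E :: "(nat \<Rightarrow> int) \<Rightarrow> 'a::comm_ring_1 fpoly set" where
  "TZ_E deg = {f. ffin f \<and> (\<forall>\<phi>. (\<forall>x. grass_elem (\<phi> x) \<and> ghomog deg (snd x) (\<phi> x))
                                 \<longrightarrow> geval \<phi> f = (\<lambda>_. 0))}"

definition ecard :: "'b set \<Rightarrow> enat" where
  "ecard A = (if finite A then enat (card A) else \<infinity>)"

text \<open>deg is a grading E^{(v_1,...,v_n)}_{(r_1,...,r_n)}: the generators are split into the
  disjoint sets {i. deg i = r_j} of cardinality v_j covering all generators.\<close>
definition is_split_grading :: "(nat \<Rightarrow> int) \<Rightarrow> int list \<Rightarrow> enat list \<Rightarrow> bool" where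
  "is_split_grading deg rs vs \<longleftrightarrow> length rs = length vs \<and> distinct rs
     \<and> (\<forall>i. deg i \<in> set rs)
     \<and> (\<forall>j<length rs. ecard {i. deg i = rs ! j} = vs ! j)"

text \<open>F<X|dZ> is encoded in the same type as F<X|Z>, as polynomials in the variables
  (i, dn). Phi_d : x_i^n \<mapsto> x_i^{dn} (renaming of variables, extended to words), and
  Psi_d : x_i^{dn} \<mapsto> x_i^{dn} is then the identity on this encoding.\<close>
definition Phi :: "int \<Rightarrow> 'a::zero fpoly \<Rightarrow> 'a fpoly" where
  "Phi d f = (\<lambda>w. if (\<forall>x\<in>set w. d dvd snd x) then f (map (\<lambda>(i, n). (i, n div d)) w) else 0)"

definition Psi :: "int \<Rightarrow> 'a::zero fpoly \<Rightarrow> 'a fpoly" where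
  "Psi d f = f"

end

theory Submission
  imports Defs "HOL-Library.Countable_Set"
begin

lemma fsupp_iff: "w \<in> fsupp f \<longleftrightarrow> f w \<noteq> 0"
  by (simp add: fsupp_def)

lemma fmult_zero_left[simp]: "fmult (\<lambda>_. 0) q = (\<lambda>_. (0::'a::comm_semiring_1))"
  by (simp add: fmult_def)

lemma fmult_zero_right[simp]: "fmult p (\<lambda>_. 0) = (\<lambda>_. (0::'a::comm_semiring_1))"
  by (simp add: fmult_def)

lemma fmult_fmono: "fmult (fmono u) (fmono v) = (fmono (u @ v) :: 'a::comm_semiring_1 fpoly)"
proof
  fix w :: "gvar list"
  have eq: "\<And>i. i \<in> {..length w} \<Longrightarrow> (fmono u (take i w) * fmono v (drop i w) :: 'a)
      = (if i = length u \<and> w = u @ v then 1 else 0)"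
  proof -
    fix i assume i: "i \<in> {..length w}"
    have "(take i w = u \<and> drop i w = v) \<longleftrightarrow> (i = length u \<and> w = u @ v)"
    proof
      assume h: "take i w = u \<and> drop i w = v"
      then have "w = u @ v" by (metis append_take_drop_id)
      moreover have "i = length u" using h i by auto
      ultimately show "i = length u \<and> w = u @ v" by simp
    next
      assume "i = length u \<and> w = u @ v" then show "take i w = u \<and> drop i w = v" by simp
    qed
    then show "(fmono u (take i w) * fmono v (drop i w) :: 'a)
      = (if i = length u \<and> w = u @ v then 1 else 0)"
      by (auto simp: fmono_def)
  qed
  have "fmult (fmono u) (fmono v) w = (\<Sum>i\<le>length w. (if i = length u \<and> w = u @ v then 1 else 0::'a))"
    unfolding fmult_def using eq by (intro sum.cong) auto
  also have "\<dots> = (if w = u @ v then 1 else 0)"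
  proof (cases "w = u @ v")
    case True
    then show ?thesis by (simp add: sum.delta)
  next
    case False then show ?thesis by simp
  qed
  also have "\<dots> = fmono (u @ v) w" by (simp add: fmono_def)
  finally show "fmult (fmono u) (fmono v) w = (fmono (u @ v) w :: 'a)" .
qed

lemma ffin_fmono: "ffin (fmono w :: 'a::{zero,one} fpoly)"
proof -
  have "fsupp (fmono w :: 'a fpoly) \<subseteq> {w}" by (auto simp: fsupp_def fmono_def)
  then show ?thesis unfolding ffin_def by (rule finite_subset) simp
qed

lemma ffin_fvar: "ffin (fvar x :: 'a::{zero,one} fpoly)"
  by (simp add: fvar_def ffin_fmono)

lemma ffin_zero: "ffin (\<lambda>_. 0::'a::zero)"
  by (simp add: ffin_def fsupp_def)

lemma ffin_fadd: "ffin p \<Longrightarrow> ffin q \<Longrightarrow> ffin (fadd p (q::'a::monoid_add fpoly))"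
proof -
  assume "ffin p" "ffin q"
  have "fsupp (fadd p q) \<subseteq> fsupp p \<union> fsupp q" by (auto simp: fsupp_def fadd_def)
  then show ?thesis using \<open>ffin p\<close> \<open>ffin q\<close> unfolding ffin_def by (meson finite_UnI finite_subset)
qed

lemma ffin_fsmult: "ffin p \<Longrightarrow> ffin (fsmult c (p::'a::mult_zero fpoly))"
proof -
  assume "ffin p"
  have "fsupp (fsmult c p) \<subseteq> fsupp p" by (auto simp: fsupp_def fsmult_def)
  then show ?thesis using \<open>ffin p\<close> unfolding ffin_def by (meson finite_subset)
qed

lemma ffin_fmult: "ffin p \<Longrightarrow> ffin q \<Longrightarrow> ffin (fmult p (q::'a::comm_semiring_1 fpoly))"
proof -
  assume "ffin p" "ffin q"
  have "fsupp (fmult p q) \<subseteq> (\<lambda>(u,v). u @ v) ` (fsupp p \<times> fsupp q)"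
  proof
    fix w assume "w \<in> fsupp (fmult p q)"
    then have "(\<Sum>i\<le>length w. p (take i w) * q (drop i w)) \<noteq> 0" by (simp add: fsupp_def fmult_def)
    then obtain i where "p (take i w) * q (drop i w) \<noteq> 0" by (meson sum.neutral)
    then have "take i w \<in> fsupp p" "drop i w \<in> fsupp q" by (auto simp: fsupp_def)
    then show "w \<in> (\<lambda>(u,v). u @ v) ` (fsupp p \<times> fsupp q)"
      by (metis (no_types, lifting) SigmaI append_take_drop_id case_prod_conv image_eqI)
  qed
  then show ?thesis using \<open>ffin p\<close> \<open>ffin q\<close> unfolding ffin_def by (meson finite_SigmaI finite_imageI finite_subset)
qed

lemma ffin_fwordprod: "(\<And>x. ffin (s x)) \<Longrightarrow> ffin (fwordprod s w :: 'a::comm_semiring_1 fpoly)"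
  by (induction w) (simp_all add: fwordprod_def ffin_fmono ffin_fmult)

lemma ffin_fsubst:
  assumes "\<And>x. ffin (s x)" "ffin f"
  shows "ffin (fsubst s (f::'a::comm_semiring_1 fpoly))"
proof -
  have "fsupp (fsubst s f) \<subseteq> (\<Union>w\<in>fsupp f. fsupp (fwordprod s w))"
  proof
    fix u assume "u \<in> fsupp (fsubst s f)"
    then have "(\<Sum>w\<in>fsupp f. f w * fwordprod s w u) \<noteq> 0" by (simp add: fsupp_def fsubst_def)
    then obtain w where "w \<in> fsupp f" "f w * fwordprod s w u \<noteq> 0" by (meson sum.neutral)
    then show "u \<in> (\<Union>w\<in>fsupp f. fsupp (fwordprod s w))" by (auto simp: fsupp_def)
  qed
  moreover have "finite (\<Union>w\<in>fsupp f. fsupp (fwordprod s w))"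
    using assms ffin_fwordprod unfolding ffin_def by blast
  ultimately show ?thesis unfolding ffin_def by (rule finite_subset)
qed

lemma fwordprod_zero:
  assumes "x \<in> set w" "s x = (\<lambda>_. 0)"
  shows "fwordprod s w = (\<lambda>_. (0::'a::comm_semiring_1))"
  using assms by (induction w) (auto simp: fwordprod_def)

definition mulv :: "int \<Rightarrow> gvar \<Rightarrow> gvar" where "mulv d = (\<lambda>(i, n). (i, d * n))"
definition umv :: "int \<Rightarrow> gvar \<Rightarrow> gvar" where "umv d = (\<lambda>(i, n). (i, n div d))"
definition good :: "int \<Rightarrow> gvar list \<Rightarrow> bool" where "good d w \<longleftrightarrow> (\<forall>x\<in>set w. d dvd snd x)"
definition unPhi :: "int \<Rightarrow> 'a fpoly \<Rightarrow> 'a fpoly" where "unPhi d f = (\<lambda>w. f (map (mulv d) w))"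

lemma snd_mulv[simp]: "snd (mulv d x) = d * snd x" by (cases x) (simp add: mulv_def)
lemma fst_mulv[simp]: "fst (mulv d x) = fst x" by (cases x) (simp add: mulv_def)
lemma snd_umv[simp]: "snd (umv d x) = snd x div d" by (cases x) (simp add: umv_def)
lemma fst_umv[simp]: "fst (umv d x) = fst x" by (cases x) (simp add: umv_def)

lemma umv_mulv[simp]: "d \<noteq> 0 \<Longrightarrow> umv d (mulv d x) = x"
  by (cases x) (simp add: umv_def mulv_def)
lemma mulv_umv: "d dvd snd x \<Longrightarrow> mulv d (umv d x) = x"
  by (cases x) (auto simp add: umv_def mulv_def)

lemma inj_mulv: "d \<noteq> 0 \<Longrightarrow> inj (mulv d)"
  by (metis injI umv_mulv)
lemma inj_map_mulv: "d \<noteq> 0 \<Longrightarrow> inj (map (mulv d))"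
  by (simp add: inj_mulv)
lemma inj_on_map_mulv: "d \<noteq> 0 \<Longrightarrow> inj_on (map (mulv d)) A"
  by (meson inj_map_mulv inj_on_subset subset_UNIV)

lemma graded_endo_substD: "graded_endo_subst s \<Longrightarrow> ffin (s x) \<and> fhomog (snd x) (s x)"
  unfolding graded_endo_subst_def by blast

lemma map_umv_mulv[simp]: "d \<noteq> 0 \<Longrightarrow> map (umv d) (map (mulv d) w) = w"
  by (induction w) auto
lemma map_mulv_umv_comp[simp]: "good d w \<Longrightarrow> map (mulv d \<circ> umv d) w = w"
  by (induction w) (auto simp: good_def mulv_umv)
lemma good_map_mulv[simp]: "good d (map (mulv d) w)"
  by (auto simp: good_def)
lemma map_mulv_umv: "good d w \<Longrightarrow> map (mulv d) (map (umv d) w) = w"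
  by (induction w) (auto simp: good_def mulv_umv)
lemma good_append[simp]: "good d (u @ v) \<longleftrightarrow> good d u \<and> good d v"
  by (auto simp: good_def)

lemma sum_list_mulv: "sum_list (map snd (map (mulv d) v)) = d * sum_list (map snd v)"
  by (induction v) (auto simp: algebra_simps)
lemma sum_list_umv: "good d w \<Longrightarrow> sum_list (map snd w) = d * sum_list (map snd (map (umv d) w))"
  by (induction w) (auto simp: good_def algebra_simps)

lemma Phi_alt: "Phi d f w = (if good d w then f (map (umv d) w) else 0)"
  by (simp add: Phi_def good_def umv_def)

lemma unPhi_fmult: "unPhi d (fmult p q) = fmult (unPhi d p) (unPhi d (q::'a::comm_semiring_1 fpoly))"
  by (simp add: unPhi_def fmult_def take_map drop_map)

lemma unPhi_fmono_nil: "unPhi d (fmono []) = fmono []"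
  by (simp add: unPhi_def fmono_def)

lemma unPhi_fwordprod: "unPhi d (fwordprod s w) = fwordprod (\<lambda>x. unPhi d (s x)) (w::gvar list)"
  by (induction w) (simp_all add: fwordprod_def unPhi_fmono_nil unPhi_fmult)

lemma fwordprod_map: "fwordprod s (map g w) = fwordprod (s \<circ> g) w"
  by (simp add: fwordprod_def foldr_map comp_def)

lemma fsupp_unPhi: "fsupp (unPhi d f) = map (mulv d) -` fsupp f"
  by (auto simp: fsupp_def unPhi_def)

lemma ffin_unPhi: "d \<noteq> 0 \<Longrightarrow> ffin f \<Longrightarrow> ffin (unPhi d f)"
  unfolding ffin_def fsupp_unPhi by (rule finite_vimageI) (simp_all add: inj_mulv)

lemma unPhi_fadd: "unPhi d (fadd p q) = fadd (unPhi d p) (unPhi d q)"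
  by (simp add: unPhi_def fadd_def)
lemma unPhi_fsmult: "unPhi d (fsmult c p) = fsmult c (unPhi d p)"
  by (simp add: unPhi_def fsmult_def)
lemma unPhi_zero: "unPhi d (\<lambda>_. 0) = (\<lambda>_. 0)"
  by (simp add: unPhi_def)

lemma unPhi_bad_homog:
  assumes "fhomog m p" "\<not> d dvd m"
  shows "unPhi d p = (\<lambda>_. 0)"
proof
  fix v
  show "unPhi d p v = 0"
  proof (rule ccontr)
    assume "unPhi d p v \<noteq> 0"
    then have "p (map (mulv d) v) \<noteq> 0" by (simp add: unPhi_def)
    moreover have "\<forall>w. p w \<noteq> 0 \<longrightarrow> sum_list (map snd w) = m" using assms(1) by (simp add: fhomog_def)
    ultimately have "sum_list (map snd (map (mulv d) v)) = m" by blast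
    then have "d dvd m" by (metis dvd_triv_left sum_list_mulv)
    then show False using assms(2) by simp
  qed
qed

lemma graded_unPhi:
  assumes "graded_endo_subst s" "d \<noteq> 0"
  shows "graded_endo_subst (\<lambda>y. unPhi d (s (mulv d y)))"
  unfolding graded_endo_subst_def
proof
  fix y
  have h: "ffin (s (mulv d y))" "fhomog (d * snd y) (s (mulv d y))"
    using graded_endo_substD[OF assms(1), of "mulv d y"] by auto
  have "fhomog (snd y) (unPhi d (s (mulv d y)))"
    unfolding fhomog_def
  proof (intro allI impI)
    fix w assume "unPhi d (s (mulv d y)) w \<noteq> 0"
    then have "s (mulv d y) (map (mulv d) w) \<noteq> 0" by (simp add: unPhi_def)
    then have "sum_list (map snd (map (mulv d) w)) = d * snd y" using h(2) fhomog_def by blast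
    then show "sum_list (map snd w) = snd y" using assms(2) sum_list_mulv[of d w] by simp
  qed
  then show "ffin (unPhi d (s (mulv d y))) \<and> fhomog (snd y) (unPhi d (s (mulv d y)))"
    using assms(2) h(1) by (simp add: ffin_unPhi)
qed

lemma fsupp_good_unPhi:
  assumes "d \<noteq> 0"
  shows "fsupp f \<inter> {w. good d w} = map (mulv d) ` fsupp (unPhi d f)"
proof
  show "fsupp f \<inter> {w. good d w} \<subseteq> map (mulv d) ` fsupp (unPhi d f)"
  proof
    fix w assume w: "w \<in> fsupp f \<inter> {w. good d w}"
    then have "good d w" by simp
    then have "w = map (mulv d) (map (umv d) w)" by (rule map_mulv_umv[symmetric])
    moreover have "map (umv d) w \<in> fsupp (unPhi d f)"
      using w by (simp add: fsupp_unPhi)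
    ultimately show "w \<in> map (mulv d) ` fsupp (unPhi d f)" by blast
  qed
qed (auto simp: fsupp_unPhi)

lemma unPhi_fsubst:
  fixes f :: "'a::comm_semiring_1 fpoly"
  assumes "d \<noteq> 0" "graded_endo_subst s" "ffin f"
  shows "unPhi d (fsubst s f) = fsubst (\<lambda>y. unPhi d (s (mulv d y))) (unPhi d f)"
proof
  fix u
  have fin: "finite (fsupp f)" using assms(3) by (simp add: ffin_def)
  have z: "\<forall>w\<in>fsupp f - fsupp f \<inter> {w. good d w}. f w * fwordprod (\<lambda>x. unPhi d (s x)) w u = 0"
  proof
    fix w assume "w \<in> fsupp f - fsupp f \<inter> {w. good d w}"
    then obtain x where x: "x \<in> set w" "\<not> d dvd snd x" by (auto simp: good_def)
    have "fhomog (snd x) (s x)" using graded_endo_substD[OF assms(2)] by blast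
    then have "unPhi d (s x) = (\<lambda>_. 0)" using x(2) by (rule unPhi_bad_homog)
    then have "fwordprod (\<lambda>x. unPhi d (s x)) w = (\<lambda>_. 0)" using x(1) by (intro fwordprod_zero) auto
    then show "f w * fwordprod (\<lambda>x. unPhi d (s x)) w u = 0" by simp
  qed
  have "unPhi d (fsubst s f) u = (\<Sum>w\<in>fsupp f. f w * fwordprod (\<lambda>x. unPhi d (s x)) w u)"
    by (simp add: fsubst_def unPhi_def[of d "fsubst s f"] unPhi_fwordprod[symmetric])
      (simp add: unPhi_def)
  also have "\<dots> = (\<Sum>w\<in>fsupp f \<inter> {w. good d w}. f w * fwordprod (\<lambda>x. unPhi d (s x)) w u)"
    by (rule sum.mono_neutral_right) (use fin z in auto)
  also have "\<dots> = (\<Sum>w\<in>map (mulv d) ` fsupp (unPhi d f). f w * fwordprod (\<lambda>x. unPhi d (s x)) w u)"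
    by (simp only: fsupp_good_unPhi[OF assms(1), of f])
  also have "\<dots> = (\<Sum>w\<in>fsupp (unPhi d f). unPhi d f w * fwordprod (\<lambda>y. unPhi d (s (mulv d y))) w u)"
    by (subst sum.reindex) (auto simp: inj_on_map_mulv[OF assms(1)] fwordprod_map comp_def unPhi_def[of d f])
  also have "\<dots> = fsubst (\<lambda>y. unPhi d (s (mulv d y))) (unPhi d f) u"
    by (simp add: fsubst_def)
  finally show "unPhi d (fsubst s f) u = fsubst (\<lambda>y. unPhi d (s (mulv d y))) (unPhi d f) u" .
qed

lemma Phi_fmult: "Phi d (fmult p q) = fmult (Phi d p) (Phi d (q::'a::comm_semiring_1 fpoly))"
proof
  fix w
  show "Phi d (fmult p q) w = fmult (Phi d p) (Phi d q) w"
  proof (cases "good d w")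
    case True
    have "\<And>i. good d (take i w)" "\<And>i. good d (drop i w)"
      using True by (metis append_take_drop_id good_append)+
    then show ?thesis using True by (simp add: Phi_alt fmult_def take_map drop_map)
  next
    case False
    have "\<And>i. \<not> good d (take i w) \<or> \<not> good d (drop i w)"
      using False by (metis append_take_drop_id good_append)
    then have "\<And>i. Phi d p (take i w) * Phi d q (drop i w) = 0"
      by (metis Phi_alt mult_zero_left mult_zero_right)
    then show ?thesis using False by (simp add: Phi_alt[of d "fmult p q"] fmult_def[of "Phi d p"])
  qed
qed

lemma Phi_fmono_nil: "Phi d (fmono []) = fmono []"
  by (auto simp: Phi_alt fmono_def good_def)

lemma Phi_fwordprod: "Phi d (fwordprod s w) = fwordprod (\<lambda>x. Phi d (s x)) (w::gvar list)"
  by (induction w) (simp_all add: fwordprod_def Phi_fmono_nil Phi_fmult)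

lemma Phi_map_mulv[simp]: "d \<noteq> 0 \<Longrightarrow> Phi d g (map (mulv d) w) = g w"
  by (metis Phi_alt good_map_mulv map_umv_mulv)

lemma fsupp_Phi: "d \<noteq> 0 \<Longrightarrow> fsupp (Phi d g) = map (mulv d) ` fsupp g"
proof
  assume d: "d \<noteq> 0"
  show "fsupp (Phi d g) \<subseteq> map (mulv d) ` fsupp g"
  proof
    fix w assume w: "w \<in> fsupp (Phi d g)"
    then have "good d w" by (auto simp: fsupp_def Phi_alt split: if_splits)
    then have "w = map (mulv d) (map (umv d) w)" by (rule map_mulv_umv[symmetric])
    moreover have "map (umv d) w \<in> fsupp g" using w \<open>good d w\<close> by (simp add: fsupp_def Phi_alt)
    ultimately show "w \<in> map (mulv d) ` fsupp g" by blast
  qed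
qed (auto simp: fsupp_def)

lemma ffin_Phi: "d \<noteq> 0 \<Longrightarrow> ffin g \<Longrightarrow> ffin (Phi d g)"
  by (simp add: ffin_def fsupp_Phi)

lemma Phi_fadd: "Phi d (fadd p q) = fadd (Phi d p) (Phi d (q::'a::comm_monoid_add fpoly))"
  by (auto simp: Phi_alt fadd_def)
lemma Phi_fsmult: "Phi d (fsmult c p) = fsmult c (Phi d (p::'a::mult_zero fpoly))"
  by (auto simp: Phi_alt fsmult_def)
lemma Phi_zero: "Phi d (\<lambda>_. 0) = (\<lambda>_. 0)"
  by (auto simp: Phi_alt)

lemma unPhi_Phi: "d \<noteq> 0 \<Longrightarrow> unPhi d (Phi d g) = g"
  by (simp add: unPhi_def)

definition Phi_subst :: "int \<Rightarrow> (gvar \<Rightarrow> 'a::comm_semiring_1 fpoly) \<Rightarrow> gvar \<Rightarrow> 'a fpoly" where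
  "Phi_subst d s x = (if d dvd snd x then Phi d (s (umv d x)) else fvar x)"

lemma Phi_fsubst:
  fixes g :: "'a::comm_semiring_1 fpoly"
  assumes "d \<noteq> 0" "ffin g"
  shows "Phi d (fsubst s g) = fsubst (Phi_subst d s) (Phi d g)"
proof
  fix u
  have "Phi d (fsubst s g) u = (\<Sum>w\<in>fsupp g. g w * Phi d (fwordprod s w) u)"
    by (simp add: Phi_alt fsubst_def)
  also have "\<dots> = (\<Sum>w\<in>fsupp g. g w * fwordprod (Phi_subst d s \<circ> mulv d) w u)"
    using assms(1) by (simp add: Phi_fwordprod comp_def Phi_subst_def)
  also have "\<dots> = (\<Sum>w\<in>fsupp g. Phi d g (map (mulv d) w) * fwordprod (Phi_subst d s) (map (mulv d) w) u)"
    using assms(1) by (simp add: fwordprod_map)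
  also have "\<dots> = (\<Sum>w\<in>map (mulv d) ` fsupp g. Phi d g w * fwordprod (Phi_subst d s) w u)"
    by (subst sum.reindex) (auto simp: inj_on_map_mulv[OF assms(1)])
  also have "\<dots> = fsubst (Phi_subst d s) (Phi d g) u"
    using assms(1) by (simp add: fsubst_def fsupp_Phi)
  finally show "Phi d (fsubst s g) u = fsubst (Phi_subst d s) (Phi d g) u" .
qed

lemma graded_Phi_subst:
  assumes "graded_endo_subst s" "d \<noteq> 0"
  shows "graded_endo_subst (Phi_subst d s)"
  unfolding graded_endo_subst_def
proof
  fix x
  show "ffin (Phi_subst d s x) \<and> fhomog (snd x) (Phi_subst d s x)"
  proof (cases "d dvd snd x")
    case True
    have h: "ffin (s (umv d x))" "fhomog (snd x div d) (s (umv d x))"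
      using graded_endo_substD[OF assms(1), of "umv d x"] by auto
    have "fhomog (snd x) (Phi d (s (umv d x)))"
      unfolding fhomog_def
    proof (intro allI impI)
      fix w assume "Phi d (s (umv d x)) w \<noteq> 0"
      then have g: "good d w" and "s (umv d x) (map (umv d) w) \<noteq> 0" by (auto simp: Phi_alt split: if_splits)
      then have "sum_list (map snd (map (umv d) w)) = snd x div d" using h(2) fhomog_def by blast
      then show "sum_list (map snd w) = snd x" using sum_list_umv[OF g] True by simp
    qed
    then show ?thesis using True h(1) assms(2) by (simp add: Phi_subst_def ffin_Phi)
  next
    case False
    have "fhomog (snd x) (fvar x :: 'a fpoly)" by (auto simp: fhomog_def fvar_def fmono_def)
    then show ?thesis using False by (simp add: Phi_subst_def ffin_fvar)
  qed
qed

section \<open>Grassmann side\<close>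

lemma gmult_zero_left[simp]: "gmult (\<lambda>_. 0) y = (\<lambda>_. (0::'a::comm_ring_1))"
  unfolding gmult_def by (rule ext) simp
lemma gmult_zero_right[simp]: "gmult x (\<lambda>_. 0) = (\<lambda>_. (0::'a::comm_ring_1))"
  unfolding gmult_def by (rule ext) simp

lemma gwordprod_zero:
  assumes "x \<in> set w" "\<phi> x = (\<lambda>_. 0)"
  shows "gwordprod \<phi> w = (\<lambda>_. (0::'a::comm_ring_1))"
  using assms by (induction w) (auto simp: gwordprod_def)

lemma gwordprod_map: "gwordprod \<phi> (map g w) = gwordprod (\<phi> \<circ> g) w"
  by (simp add: gwordprod_def foldr_map comp_def)

lemma geval_unPhi:
  fixes f :: "'a::comm_ring_1 fpoly"
  assumes "d \<noteq> 0" "ffin f" "\<And>x. \<not> d dvd snd x \<Longrightarrow> \<phi> x = (\<lambda>_. 0)"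
  shows "geval \<phi> f = geval (\<phi> \<circ> mulv d) (unPhi d f)"
proof
  fix C
  have fin: "finite (fsupp f)" using assms(2) by (simp add: ffin_def)
  have z: "\<forall>w\<in>fsupp f - fsupp f \<inter> {w. good d w}. f w * gwordprod \<phi> w C = 0"
  proof
    fix w assume "w \<in> fsupp f - fsupp f \<inter> {w. good d w}"
    then obtain x where x: "x \<in> set w" "\<not> d dvd snd x" by (auto simp: good_def)
    then have "gwordprod \<phi> w = (\<lambda>_. 0)" using assms(3) by (intro gwordprod_zero) blast+
    then show "f w * gwordprod \<phi> w C = 0" by simp
  qed
  have "geval \<phi> f C = (\<Sum>w\<in>fsupp f. f w * gwordprod \<phi> w C)"
    by (simp add: geval_def)
  also have "\<dots> = (\<Sum>w\<in>fsupp f \<inter> {w. good d w}. f w * gwordprod \<phi> w C)"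
    by (rule sum.mono_neutral_right) (use fin z in auto)
  also have "\<dots> = (\<Sum>w\<in>map (mulv d) ` fsupp (unPhi d f). f w * gwordprod \<phi> w C)"
    by (simp only: fsupp_good_unPhi[OF assms(1), of f])
  also have "\<dots> = (\<Sum>w\<in>fsupp (unPhi d f). unPhi d f w * gwordprod (\<phi> \<circ> mulv d) w C)"
    by (subst sum.reindex) (auto simp: inj_on_map_mulv[OF assms(1)] gwordprod_map unPhi_def[of d f])
  also have "\<dots> = geval (\<phi> \<circ> mulv d) (unPhi d f) C"
    by (simp add: geval_def)
  finally show "geval \<phi> f C = geval (\<phi> \<circ> mulv d) (unPhi d f) C" .
qed

subsection \<open>Transport along a permutation of the generators\<close>

definition ninv :: "(nat \<Rightarrow> nat) \<Rightarrow> nat set \<Rightarrow> (nat \<times> nat) set" where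
  "ninv \<tau> A = {(p, q). p \<in> A \<and> q \<in> A \<and> p < q \<and> \<tau> q < \<tau> p}"

definition gtr :: "(nat \<Rightarrow> nat) \<Rightarrow> 'a::comm_ring_1 grass \<Rightarrow> 'a grass" where
  "gtr \<tau> x = (\<lambda>B. (-1) ^ card (ninv \<tau> (\<tau> -` B)) * x (\<tau> -` B))"

lemma sign_count:
  assumes "finite A" "finite B" "A \<inter> B = {}" "inj \<tau>"
  shows "card (ninv \<tau> (A \<union> B)) + card {(p, q). p \<in> A \<and> q \<in> B \<and> q < p}
       = card (ninv \<tau> A) + card (ninv \<tau> B) + card {(p, q). p \<in> A \<and> q \<in> B \<and> \<tau> q < \<tau> p}
         + 2 * card {(p, q). p \<in> A \<and> q \<in> B \<and> q < p \<and> \<tau> p < \<tau> q}"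
proof -
  define X1 where "X1 = {(p, q). p \<in> A \<and> q \<in> B \<and> p < q \<and> \<tau> q < \<tau> p}"
  define X2 where "X2 = {(p, q). p \<in> B \<and> q \<in> A \<and> p < q \<and> \<tau> q < \<tau> p}"
  define X2' where "X2' = {(p, q). p \<in> A \<and> q \<in> B \<and> q < p \<and> \<tau> p < \<tau> q}"
  define ZY where "ZY = {(p, q). p \<in> A \<and> q \<in> B \<and> q < p \<and> \<tau> q < \<tau> p}"
  define Z where "Z = {(p, q). p \<in> A \<and> q \<in> B \<and> q < p}"
  define Y where "Y = {(p, q). p \<in> A \<and> q \<in> B \<and> \<tau> q < \<tau> p}"
  have finAB: "finite (A \<times> B)" "finite (B \<times> A)" "finite (A \<times> A)" "finite (B \<times> B)"
    using assms by auto
  have fX1: "finite X1" by (rule finite_subset[OF _ finAB(1)]) (auto simp: X1_def)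
  have fX2: "finite X2" by (rule finite_subset[OF _ finAB(2)]) (auto simp: X2_def)
  have fX2': "finite X2'" by (rule finite_subset[OF _ finAB(1)]) (auto simp: X2'_def)
  have fZY: "finite ZY" by (rule finite_subset[OF _ finAB(1)]) (auto simp: ZY_def)
  have fA: "finite (ninv \<tau> A)" by (rule finite_subset[OF _ finAB(3)]) (auto simp: ninv_def)
  have fB: "finite (ninv \<tau> B)" by (rule finite_subset[OF _ finAB(4)]) (auto simp: ninv_def)
  have neq: "\<And>p q. p \<in> A \<Longrightarrow> q \<in> B \<Longrightarrow> p \<noteq> q" using assms(3) by auto
  have tneq: "\<And>p q. p \<in> A \<Longrightarrow> q \<in> B \<Longrightarrow> \<tau> p \<noteq> \<tau> q"
    using neq assms(4) by (metis injD)
  have e1: "ninv \<tau> (A \<union> B) = ((ninv \<tau> A \<union> ninv \<tau> B) \<union> X1) \<union> X2"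
    by (auto simp: ninv_def X1_def X2_def)
  have d1: "(ninv \<tau> A \<union> ninv \<tau> B \<union> X1) \<inter> X2 = {}"
    using assms(3) by (auto simp: ninv_def X1_def X2_def)
  have d2: "(ninv \<tau> A \<union> ninv \<tau> B) \<inter> X1 = {}"
    using assms(3) by (auto simp: ninv_def X1_def)
  have d3: "ninv \<tau> A \<inter> ninv \<tau> B = {}"
    using assms(3) by (auto simp: ninv_def)
  have c1: "card (ninv \<tau> (A \<union> B)) = card (ninv \<tau> A) + card (ninv \<tau> B) + card X1 + card X2"
    unfolding e1 using fA fB fX1 fX2 d1 d2 d3 by (simp add: card_Un_disjoint)
  have "X2 = (\<lambda>(p, q). (q, p)) ` X2'"
  proof (rule equalityI)
    show "X2 \<subseteq> (\<lambda>(p, q). (q, p)) ` X2'"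
    proof (rule subsetI)
      fix pq assume m: "pq \<in> X2"
      obtain p q where pq: "pq = (p, q)" by (cases pq)
      have "(q, p) \<in> X2'" using m pq by (simp add: X2_def X2'_def)
      then show "pq \<in> (\<lambda>(p, q). (q, p)) ` X2'" using pq by (intro image_eqI[where x="(q, p)"]) simp_all
    qed
    show "(\<lambda>(p, q). (q, p)) ` X2' \<subseteq> X2" by (auto simp: X2_def X2'_def)
  qed
  moreover have "inj_on (\<lambda>(p, q). (q, p)) X2'" by (auto simp: inj_on_def)
  ultimately have c2: "card X2 = card X2'" by (simp add: card_image)
  have eZ: "Z = X2' \<union> ZY"
  proof (rule set_eqI)
    fix pq :: "nat \<times> nat"
    obtain p q where pq: "pq = (p, q)" by (cases pq)
    show "pq \<in> Z \<longleftrightarrow> pq \<in> X2' \<union> ZY"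
      unfolding pq Z_def X2'_def ZY_def using tneq[of p q] by auto
  qed
  have cZ: "card Z = card X2' + card ZY"
    unfolding eZ by (rule card_Un_disjoint[OF fX2' fZY]) (auto simp: X2'_def ZY_def)
  have eY: "Y = X1 \<union> ZY"
  proof (rule set_eqI)
    fix pq :: "nat \<times> nat"
    obtain p q where pq: "pq = (p, q)" by (cases pq)
    show "pq \<in> Y \<longleftrightarrow> pq \<in> X1 \<union> ZY"
      unfolding pq Y_def X1_def ZY_def using neq[of p q] by auto
  qed
  have cY: "card Y = card X1 + card ZY"
    unfolding eY by (rule card_Un_disjoint[OF fX1 fZY]) (auto simp: X1_def ZY_def)
  show ?thesis
    using c1 c2 cZ cY unfolding Z_def[symmetric] Y_def[symmetric] X2'_def[symmetric] by simp
qed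

lemma neg_one_power_even: "((-1::'a::comm_ring_1) ^ (2 * k)) = 1"
  by (simp add: power_mult)

lemma sign_gtr:
  assumes "finite A" "finite B" "A \<inter> B = {}" "inj \<tau>"
  shows "(-1) ^ card (ninv \<tau> (A \<union> B)) * gsign A B
       = gsign (\<tau> ` A) (\<tau> ` B) * (-1) ^ card (ninv \<tau> A) * ((-1::'a::comm_ring_1) ^ card (ninv \<tau> B))"
proof -
  have img: "{(p, q). p \<in> \<tau> ` A \<and> q \<in> \<tau> ` B \<and> q < p}
      = (\<lambda>(p, q). (\<tau> p, \<tau> q)) ` {(p, q). p \<in> A \<and> q \<in> B \<and> \<tau> q < \<tau> p}"
  proof (rule equalityI)
    show "{(p, q). p \<in> \<tau> ` A \<and> q \<in> \<tau> ` B \<and> q < p}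
      \<subseteq> (\<lambda>(p, q). (\<tau> p, \<tau> q)) ` {(p, q). p \<in> A \<and> q \<in> B \<and> \<tau> q < \<tau> p}"
    proof (rule subsetI)
      fix pq assume m: "pq \<in> {(p, q). p \<in> \<tau> ` A \<and> q \<in> \<tau> ` B \<and> q < p}"
      obtain p q where pq: "pq = (p, q)" by (cases pq)
      have "p \<in> \<tau> ` A" "q \<in> \<tau> ` B" "q < p" using m pq by simp_all
      then obtain p' q' where "p' \<in> A" "q' \<in> B" "p = \<tau> p'" "q = \<tau> q'" by (meson imageE)
      then show "pq \<in> (\<lambda>(p, q). (\<tau> p, \<tau> q)) ` {(p, q). p \<in> A \<and> q \<in> B \<and> \<tau> q < \<tau> p}"
        using pq \<open>q < p\<close> by (intro image_eqI[where x="(p', q')"]) simp_all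
    qed
    show "(\<lambda>(p, q). (\<tau> p, \<tau> q)) ` {(p, q). p \<in> A \<and> q \<in> B \<and> \<tau> q < \<tau> p}
      \<subseteq> {(p, q). p \<in> \<tau> ` A \<and> q \<in> \<tau> ` B \<and> q < p}"
      by auto
  qed
  have inj2: "inj_on (\<lambda>(p, q). (\<tau> p, \<tau> q)) {(p, q). p \<in> A \<and> q \<in> B \<and> \<tau> q < \<tau> p}"
  proof (rule inj_onI)
    fix x y assume "x \<in> {(p, q). p \<in> A \<and> q \<in> B \<and> \<tau> q < \<tau> p}" "y \<in> {(p, q). p \<in> A \<and> q \<in> B \<and> \<tau> q < \<tau> p}"
      and e: "(case x of (p, q) \<Rightarrow> (\<tau> p, \<tau> q)) = (case y of (p, q) \<Rightarrow> (\<tau> p, \<tau> q))"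
    obtain x1 x2 y1 y2 where xy: "x = (x1, x2)" "y = (y1, y2)" by (cases x, cases y)
    have "\<tau> x1 = \<tau> y1" "\<tau> x2 = \<tau> y2" using e xy by simp_all
    then show "x = y" using xy assms(4) by (simp add: inj_eq)
  qed
  have g2: "gsign (\<tau> ` A) (\<tau> ` B) = ((-1::'a) ^ card {(p, q). p \<in> A \<and> q \<in> B \<and> \<tau> q < \<tau> p})"
    unfolding gsign_def img using card_image[OF inj2] by simp
  have "(-1) ^ card (ninv \<tau> (A \<union> B)) * gsign A B
      = ((-1::'a) ^ (card (ninv \<tau> (A \<union> B)) + card {(p, q). p \<in> A \<and> q \<in> B \<and> q < p}))"
    by (simp add: gsign_def power_add)
  also have "\<dots> = (-1) ^ (card (ninv \<tau> A) + card (ninv \<tau> B) + card {(p, q). p \<in> A \<and> q \<in> B \<and> \<tau> q < \<tau> p}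
         + 2 * card {(p, q). p \<in> A \<and> q \<in> B \<and> q < p \<and> \<tau> p < \<tau> q})"
    using sign_count[OF assms] by simp
  also have "\<dots> = gsign (\<tau> ` A) (\<tau> ` B) * (-1) ^ card (ninv \<tau> A) * ((-1::'a) ^ card (ninv \<tau> B))"
    unfolding g2 power_add neg_one_power_even by (simp add: algebra_simps)
  finally show ?thesis .
qed

lemma gtr_mult:
  fixes x y :: "'a::comm_ring_1 grass"
  assumes "bij \<tau>"
  shows "gtr \<tau> (gmult x y) = gmult (gtr \<tau> x) (gtr \<tau> y)"
proof (rule ext)
  fix C
  have inj: "inj \<tau>" and surj: "surj \<tau>" using assms by (auto simp: bij_def)
  define A0 where "A0 = \<tau> -` C"
  have C_eq: "C = \<tau> ` A0" unfolding A0_def using surj_image_vimage_eq[OF surj] by simp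
  let ?s = "\<lambda>A. (-1::'a) ^ card (ninv \<tau> A)"
  show "gtr \<tau> (gmult x y) C = gmult (gtr \<tau> x) (gtr \<tau> y) C"
  proof (cases "finite C")
    case False
    then have "\<not> finite A0" using C_eq by auto
    then show ?thesis using False by (simp add: gtr_def gmult_def A0_def[symmetric])
  next
    case True
    then have finA0: "finite A0" unfolding A0_def using inj by (simp add: finite_vimageI)
    have lhs: "gtr \<tau> (gmult x y) C = ?s A0 * (\<Sum>A\<in>Pow A0. gsign A (A0 - A) * x A * y (A0 - A))"
      using finA0 by (simp add: gtr_def gmult_def A0_def[symmetric])
    have "gmult (gtr \<tau> x) (gtr \<tau> y) C = (\<Sum>B\<in>Pow C. gsign B (C - B) * gtr \<tau> x B * gtr \<tau> y (C - B))"
      using True by (simp add: gmult_def)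
    also have "\<dots> = (\<Sum>A\<in>Pow A0. gsign (\<tau> ` A) (C - \<tau> ` A) * gtr \<tau> x (\<tau> ` A) * gtr \<tau> y (C - \<tau> ` A))"
    proof -
      have "Pow C = image \<tau> ` Pow A0" using image_Pow_surj[OF C_eq[symmetric]] by simp
      moreover have "inj_on (image \<tau>) (Pow A0)" using inj by (meson inj_on_image_Pow inj_on_subset subset_UNIV)
      ultimately show ?thesis by (simp add: sum.reindex)
    qed
    also have "\<dots> = (\<Sum>A\<in>Pow A0. ?s A0 * (gsign A (A0 - A) * x A * y (A0 - A)))"
    proof (rule sum.cong[OF refl])
      fix A assume "A \<in> Pow A0"
      then have AA0: "A \<subseteq> A0" by simp
      have d: "C - \<tau> ` A = \<tau> ` (A0 - A)" using C_eq inj by (simp add: image_set_diff)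
      have v1: "\<tau> -` (\<tau> ` A) = A" using inj by (rule inj_vimage_image_eq)
      have v2: "\<tau> -` (C - \<tau> ` A) = A0 - A" unfolding d using inj by (rule inj_vimage_image_eq)
      have finA: "finite A" "finite (A0 - A)" using finA0 AA0 by (auto intro: finite_subset)
      have un: "A \<union> (A0 - A) = A0" using AA0 by auto
      have sg: "?s A0 * gsign A (A0 - A) = gsign (\<tau> ` A) (\<tau> ` (A0 - A)) * ?s A * ?s (A0 - A)"
        using sign_gtr[OF finA(1) finA(2) _ inj, where 'a='a] un by auto
      have "gsign (\<tau> ` A) (C - \<tau> ` A) * gtr \<tau> x (\<tau> ` A) * gtr \<tau> y (C - \<tau> ` A)
          = gsign (\<tau> ` A) (\<tau> ` (A0 - A)) * (?s A * x A) * (?s (A0 - A) * y (A0 - A))"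
        unfolding gtr_def v1 v2 d[symmetric] ..
      also have "\<dots> = (gsign (\<tau> ` A) (\<tau> ` (A0 - A)) * ?s A * ?s (A0 - A)) * (x A * y (A0 - A))"
        by (simp add: algebra_simps)
      also have "\<dots> = (?s A0 * gsign A (A0 - A)) * (x A * y (A0 - A))"
        unfolding sg ..
      finally show "gsign (\<tau> ` A) (C - \<tau> ` A) * gtr \<tau> x (\<tau> ` A) * gtr \<tau> y (C - \<tau> ` A)
          = ?s A0 * (gsign A (A0 - A) * x A * y (A0 - A))"
        by (simp add: algebra_simps)
    qed
    also have "\<dots> = gtr \<tau> (gmult x y) C"
      unfolding lhs by (simp add: sum_distrib_left)
    finally show ?thesis ..
  qed
qed

lemma gtr_gone:
  assumes "bij \<tau>"
  shows "gtr \<tau> gone = (gone :: 'a::comm_ring_1 grass)"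
proof (rule ext)
  fix B
  have surj: "surj \<tau>" using assms by (simp add: bij_def)
  have "\<tau> -` B = {} \<longleftrightarrow> B = {}"
    using surj by (metis surj_image_vimage_eq image_empty vimage_empty)
  then show "gtr \<tau> gone B = (gone B :: 'a)"
    by (auto simp: gtr_def gone_def ninv_def)
qed

lemma gtr_gwordprod:
  assumes "bij \<tau>"
  shows "gtr \<tau> (gwordprod \<phi> w) = gwordprod (\<lambda>x. gtr \<tau> (\<phi> x)) (w :: gvar list)"
  by (induction w) (simp_all add: gwordprod_def gtr_gone[OF assms] gtr_mult[OF assms])

lemma gtr_geval:
  fixes f :: "'a::comm_ring_1 fpoly"
  assumes "bij \<tau>"
  shows "gtr \<tau> (geval \<phi> f) = geval (\<lambda>x. gtr \<tau> (\<phi> x)) f"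
proof (rule ext)
  fix B
  have "gtr \<tau> (geval \<phi> f) B = (\<Sum>w\<in>fsupp f. f w * ((-1) ^ card (ninv \<tau> (\<tau> -` B)) * gwordprod \<phi> w (\<tau> -` B)))"
    by (simp add: gtr_def geval_def sum_distrib_left algebra_simps)
  also have "\<dots> = geval (\<lambda>x. gtr \<tau> (\<phi> x)) f B"
    by (simp add: geval_def gtr_gwordprod[OF assms, symmetric]) (simp add: gtr_def)
  finally show "gtr \<tau> (geval \<phi> f) B = geval (\<lambda>x. gtr \<tau> (\<phi> x)) f B" .
qed

lemma gtr_zero_imp:
  fixes x :: "'a::comm_ring_1 grass"
  assumes "bij \<tau>" "gtr \<tau> x = (\<lambda>_. 0)"
  shows "x = (\<lambda>_. 0)"
proof (rule ext)
  fix A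
  have inj: "inj \<tau>" using assms(1) by (simp add: bij_def)
  have "gtr \<tau> x (\<tau> ` A) = 0" using assms(2) by simp
  then have "(-1) ^ card (ninv \<tau> A) * x A = 0"
    by (simp add: gtr_def inj_vimage_image_eq[OF inj])
  moreover have "((-1::'a) ^ k) * (-1) ^ k = 1" for k
    by (metis power_mult_distrib mult_minus_left mult_minus_right mult_1_left minus_minus power_one)
  ultimately show "x A = 0"
    by (metis mult.assoc mult_1_left mult_zero_right)
qed

lemma gtr_grass_elem:
  fixes x :: "'a::comm_ring_1 grass"
  assumes "bij \<tau>" "grass_elem x"
  shows "grass_elem (gtr \<tau> x)"
proof -
  have surj: "surj \<tau>" and inj: "inj \<tau>" using assms(1) by (auto simp: bij_def)
  have sub: "{B. gtr \<tau> x B \<noteq> 0} \<subseteq> image \<tau> ` {A. x A \<noteq> 0}"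
  proof
    fix B assume "B \<in> {B. gtr \<tau> x B \<noteq> 0}"
    then have "x (\<tau> -` B) \<noteq> 0" by (auto simp: gtr_def)
    moreover have "B = \<tau> ` (\<tau> -` B)" using surj by (simp add: surj_image_vimage_eq)
    ultimately show "B \<in> image \<tau> ` {A. x A \<noteq> 0}" by blast
  qed
  have "finite {A. x A \<noteq> 0}" using assms(2) by (simp add: grass_elem_def)
  then have f1: "finite {B. gtr \<tau> x B \<noteq> 0}" using sub by (meson finite_imageI finite_subset)
  have f2: "\<forall>B. gtr \<tau> x B \<noteq> 0 \<longrightarrow> finite B"
  proof (intro allI impI)
    fix B assume "gtr \<tau> x B \<noteq> 0"
    then have "x (\<tau> -` B) \<noteq> 0" by (auto simp: gtr_def)
    then have "finite (\<tau> -` B)" using assms(2) by (simp add: grass_elem_def)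
    moreover have "B = \<tau> ` (\<tau> -` B)" using surj by (simp add: surj_image_vimage_eq)
    ultimately show "finite B" by (metis finite_imageI)
  qed
  show ?thesis using f1 f2 by (simp add: grass_elem_def)
qed

lemma gtr_ghomog:
  fixes x :: "'a::comm_ring_1 grass"
  assumes "bij \<tau>" "\<And>i. rB * \<delta>B (\<tau> i) = rA * \<delta>A i" "rB * m = rA * n" "rB \<noteq> 0"
    and "ghomog \<delta>A n x"
  shows "ghomog \<delta>B m (gtr \<tau> x)"
  unfolding ghomog_def
proof (intro allI impI)
  fix B assume "gtr \<tau> x B \<noteq> 0"
  have surj: "surj \<tau>" and inj: "inj \<tau>" using assms(1) by (auto simp: bij_def)
  have "x (\<tau> -` B) \<noteq> 0" using \<open>gtr \<tau> x B \<noteq> 0\<close> by (auto simp: gtr_def)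
  then have s1: "(\<Sum>i\<in>\<tau> -` B. \<delta>A i) = n" using assms(5) by (simp add: ghomog_def)
  have "(\<Sum>j\<in>B. \<delta>B j) = (\<Sum>j\<in>\<tau> ` (\<tau> -` B). \<delta>B j)" using surj by (simp add: surj_image_vimage_eq)
  also have "\<dots> = (\<Sum>i\<in>\<tau> -` B. \<delta>B (\<tau> i))"
  proof -
    have "inj_on \<tau> (\<tau> -` B)" by (meson inj inj_on_subset subset_UNIV)
    then show ?thesis using sum.reindex[of \<tau> "\<tau> -` B" \<delta>B] by (simp only: comp_def)
  qed
  finally have e: "(\<Sum>j\<in>B. \<delta>B j) = (\<Sum>i\<in>\<tau> -` B. \<delta>B (\<tau> i))" .
  have "rB * (\<Sum>j\<in>B. \<delta>B j) = (\<Sum>i\<in>\<tau> -` B. rB * \<delta>B (\<tau> i))" unfolding e by (simp add: sum_distrib_left)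
  also have "\<dots> = rA * n" using s1 assms(2) by (simp add: sum_distrib_left[symmetric])
  finally show "(\<Sum>j\<in>B. \<delta>B j) = m" using assms(3,4) by (metis mult_cancel_left)
qed

lemma TZ_gen_least: "is_TZ_ideal I \<Longrightarrow> S \<subseteq> I \<Longrightarrow> TZ_gen S \<subseteq> I"
  unfolding TZ_gen_def by blast

lemma TZ_gen_sub: "S \<subseteq> TZ_gen S"
  unfolding TZ_gen_def by blast

lemma TZ_gen_is:
  fixes S :: "'a::comm_semiring_1 fpoly set"
  assumes "\<exists>I. is_TZ_ideal I \<and> S \<subseteq> I"
  shows "is_TZ_ideal (TZ_gen S)"
proof -
  let ?F = "{I. is_TZ_ideal I \<and> S \<subseteq> I}"
  obtain I0 where I0: "is_TZ_ideal I0" "S \<subseteq> I0" using assms by blast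
  have mem: "f \<in> TZ_gen S \<longleftrightarrow> (\<forall>I\<in>?F. f \<in> I)" for f unfolding TZ_gen_def by blast
  have sub: "TZ_gen S \<subseteq> {f. ffin f}"
    using TZ_gen_least[OF I0] I0(1) by (auto simp: is_TZ_ideal_def is_ideal_def)
  have z: "(\<lambda>_. 0) \<in> TZ_gen S" unfolding mem by (auto simp: is_TZ_ideal_def is_ideal_def)
  have ad: "\<forall>p\<in>TZ_gen S. \<forall>q\<in>TZ_gen S. fadd p q \<in> TZ_gen S"
    by (auto simp: mem is_TZ_ideal_def is_ideal_def)
  have sm: "\<forall>p\<in>TZ_gen S. \<forall>c. fsmult c p \<in> TZ_gen S"
    by (auto simp: mem is_TZ_ideal_def is_ideal_def)
  have mu: "\<forall>p\<in>TZ_gen S. \<forall>q. ffin q \<longrightarrow> fmult q p \<in> TZ_gen S \<and> fmult p q \<in> TZ_gen S"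
    by (auto simp: mem is_TZ_ideal_def is_ideal_def)
  have su: "\<forall>s. graded_endo_subst s \<longrightarrow> (\<forall>f\<in>TZ_gen S. fsubst s f \<in> TZ_gen S)"
    by (auto simp: mem is_TZ_ideal_def)
  show ?thesis using sub z ad sm mu su by (simp add: is_TZ_ideal_def is_ideal_def)
qed

lemma ideal_sum:
  fixes I :: "'a::comm_semiring_1 fpoly set"
  assumes "is_ideal I" "finite W" "\<And>w. w \<in> W \<Longrightarrow> fmono w \<in> I"
  shows "(\<lambda>u. \<Sum>w\<in>W. c w * fmono w u) \<in> I"
  using assms(2,3)
proof (induction W rule: finite_induct)
  case empty
  then show ?case using assms(1) by (simp add: is_ideal_def)
next
  case (insert w W)
  have "(\<lambda>u. \<Sum>w\<in>insert w W. c w * fmono w u) = fadd (fsmult (c w) (fmono w)) (\<lambda>u. \<Sum>w\<in>W. c w * fmono w u)"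
    using insert(1,2) by (simp add: fadd_def fsmult_def)
  moreover have "fsmult (c w) (fmono w) \<in> I" using insert(4) assms(1) by (simp add: is_ideal_def)
  moreover have "(\<lambda>u. \<Sum>w\<in>W. c w * fmono w u) \<in> I" using insert by simp
  ultimately show ?case using assms(1) by (simp add: is_ideal_def)
qed

lemma ecard_bij:
  fixes A B :: "nat set"
  assumes "ecard A = ecard B"
  shows "\<exists>f. bij_betw f A B"
proof (cases "finite A")
  case True
  then have "finite B" "card A = card B" using assms by (auto simp: ecard_def split: if_splits)
  then show ?thesis using True finite_same_card_bij by blast
next
  case False
  then have "infinite B" using assms by (auto simp: ecard_def split: if_splits)
  obtain g where g: "bij_betw g (UNIV :: nat set) A"
    using countable_infiniteE'[OF countableI_type False] by blast
  obtain h where h: "bij_betw h (UNIV :: nat set) B"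
    using countable_infiniteE'[OF countableI_type \<open>infinite B\<close>] by blast
  have "bij_betw (h \<circ> inv_into UNIV g) A B"
    by (rule bij_betw_trans[OF bij_betw_inv_into[OF g] h])
  then show ?thesis by blast
qed

lemma exists_sigma:
  fixes deg deg' :: "nat \<Rightarrow> int"
  assumes g: "is_split_grading deg [r1, r2, r3] [v1, v2, v3]"
    and g': "is_split_grading deg' [s1, s2, s3] [v1, v2, v3]"
    and e: "r1 = d * s1" "r2 = d * s2" "r3 = d * s3"
  shows "\<exists>\<sigma>. bij \<sigma> \<and> (\<forall>i. deg (\<sigma> i) = d * deg' i)"
proof -
  define L1 where "L1 = {i. deg i = r1}"
  define L2 where "L2 = {i. deg i = r2}"
  define L3 where "L3 = {i. deg i = r3}"
  define M1 where "M1 = {i. deg' i = s1}"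
  define M2 where "M2 = {i. deg' i = s2}"
  define M3 where "M3 = {i. deg' i = s3}"
  have dr: "r1 \<noteq> r2" "r1 \<noteq> r3" "r2 \<noteq> r3" using g by (auto simp: is_split_grading_def)
  have ds: "s1 \<noteq> s2" "s1 \<noteq> s3" "s2 \<noteq> s3" using g' by (auto simp: is_split_grading_def)
  have cov: "deg i = r1 \<or> deg i = r2 \<or> deg i = r3" for i using g by (auto simp: is_split_grading_def)
  have cov': "deg' i = s1 \<or> deg' i = s2 \<or> deg' i = s3" for i using g' by (auto simp: is_split_grading_def)
  have ec: "\<forall>j<3. ecard {i. deg i = [r1, r2, r3] ! j} = [v1, v2, v3] ! j"
    using g by (simp add: is_split_grading_def)
  have ec': "\<forall>j<3. ecard {i. deg' i = [s1, s2, s3] ! j} = [v1, v2, v3] ! j"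
    using g' by (simp add: is_split_grading_def)
  have "ecard M1 = ecard L1" using ec[rule_format, of 0] ec'[rule_format, of 0] by (simp add: L1_def M1_def)
  then obtain f1 where f1: "bij_betw f1 M1 L1" using ecard_bij by blast
  have "ecard M2 = ecard L2" using ec[rule_format, of 1] ec'[rule_format, of 1] by (simp add: L2_def M2_def)
  then obtain f2 where f2: "bij_betw f2 M2 L2" using ecard_bij by blast
  have "ecard M3 = ecard L3" using ec[rule_format, of 2] ec'[rule_format, of 2] by (simp add: L3_def M3_def)
  then obtain f3 where f3: "bij_betw f3 M3 L3" using ecard_bij by blast
  define f23 where "f23 = (\<lambda>x. if x \<in> M2 then f2 x else f3 x)"
  have b23: "bij_betw f23 (M2 \<union> M3) (L2 \<union> L3)"
    unfolding f23_def by (rule bij_betw_disjoint_Un[OF f2 f3]) (use dr ds in \<open>auto simp: L2_def L3_def M2_def M3_def\<close>)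
  define \<sigma> where "\<sigma> = (\<lambda>x. if x \<in> M1 then f1 x else f23 x)"
  have b: "bij_betw \<sigma> (M1 \<union> (M2 \<union> M3)) (L1 \<union> (L2 \<union> L3))"
    unfolding \<sigma>_def by (rule bij_betw_disjoint_Un[OF f1 b23]) (use dr ds in \<open>auto simp: L1_def L2_def L3_def M1_def M2_def M3_def\<close>)
  have u1: "M1 \<union> (M2 \<union> M3) = UNIV" using cov' by (auto simp: M1_def M2_def M3_def)
  have u2: "L1 \<union> (L2 \<union> L3) = UNIV" using cov by (auto simp: L1_def L2_def L3_def)
  have "bij \<sigma>" using b u1 u2 by simp
  moreover have "deg (\<sigma> i) = d * deg' i" for i
  proof -
    consider "i \<in> M1" | "i \<notin> M1" "i \<in> M2" | "i \<notin> M1" "i \<notin> M2" "i \<in> M3"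
      using cov' by (auto simp: M1_def M2_def M3_def)
    then show ?thesis
    proof cases
      case 1
      then have "f1 i \<in> L1" using f1 by (meson bij_betwE)
      then show ?thesis using 1 e by (simp add: \<sigma>_def L1_def M1_def)
    next
      case 2
      then have "f2 i \<in> L2" using f2 by (meson bij_betwE)
      then show ?thesis using 2 e by (simp add: \<sigma>_def f23_def L2_def M2_def)
    next
      case 3
      then have "f3 i \<in> L3" using f3 by (meson bij_betwE)
      then show ?thesis using 3 e by (simp add: \<sigma>_def f23_def L3_def M3_def)
    qed
  qed
  ultimately show ?thesis by blast
qed

lemma ideal_multL: "is_ideal I \<Longrightarrow> p \<in> I \<Longrightarrow> ffin q \<Longrightarrow> fmult q p \<in> I"
  unfolding is_ideal_def by blast
lemma ideal_multR: "is_ideal I \<Longrightarrow> p \<in> I \<Longrightarrow> ffin q \<Longrightarrow> fmult p q \<in> I"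
  unfolding is_ideal_def by blast
lemma ideal_add: "is_ideal I \<Longrightarrow> p \<in> I \<Longrightarrow> q \<in> I \<Longrightarrow> fadd p q \<in> I"
  unfolding is_ideal_def by blast

lemma fvar_homog: "fhomog (snd x) (fvar x :: 'a::{zero,one} fpoly)"
  by (auto simp: fhomog_def fvar_def fmono_def)

lemma ghomog_zero: "ghomog deg n (\<lambda>_. 0)"
  by (simp add: ghomog_def)

lemma grass_elem_zero: "grass_elem (\<lambda>_. 0)"
  by (simp add: grass_elem_def)

theorem corollary5p6:
  fixes a b c :: int and k :: enat
    and deg deg' :: "nat \<Rightarrow> int"
    and S :: "'a::field_char_0 fpoly set"
  assumes "a > 0" and "b > 0" and "- b < c" and "c < a"
    and "k \<ge> enat (nat (gcd (a div gcd a (gcd b c)) (b div gcd a (gcd b c)) - 1))"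
    and "is_split_grading deg [- b, c, a] [\<infinity>, k, \<infinity>]"
    and "is_split_grading deg'
           [- (b div gcd a (gcd b c)), c div gcd a (gcd b c), a div gcd a (gcd b c)] [\<infinity>, k, \<infinity>]"
    and "TZ_gen S = TZ_E deg'"
  shows "TZ_gen ((\<lambda>f. Psi (gcd a (gcd b c)) (Phi (gcd a (gcd b c)) f)) ` S
            \<union> {fvar (i, m) | i m. \<not> (gcd a (gcd b c)) dvd m}) = TZ_E deg"
proof -
  define d where "d = gcd a (gcd b c)"
  have d0: "d \<noteq> 0" using assms(1) by (simp add: d_def)
  have da: "d dvd a" and db: "d dvd b" and dc: "d dvd c"
    unfolding d_def by (meson gcd_dvd1 gcd_dvd2 dvd_trans)+
  have gr: "is_split_grading deg [- b, c, a] [\<infinity>, k, \<infinity>]" by fact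
  have gr': "is_split_grading deg' [- (b div d), c div d, a div d] [\<infinity>, k, \<infinity>]"
    using assms(7) by (simp add: d_def)
  obtain \<sigma> where bs: "bij \<sigma>" and sdeg: "\<And>i. deg (\<sigma> i) = d * deg' i"
    using exists_sigma[OF gr gr', of d] da db dc by auto
  define \<tau> where "\<tau> = inv \<sigma>"
  have bt: "bij \<tau>" unfolding \<tau>_def using bs by (simp add: bij_imp_bij_inv)
  have tdeg: "d * deg' (\<tau> j) = 1 * deg j" for j
    using sdeg[of "\<tau> j"] bij_is_surj[OF bs] by (simp add: \<tau>_def surj_f_inv_f)
  have ddeg: "d dvd deg i" for i
  proof -
    have "deg i \<in> set [- b, c, a]" using gr by (simp add: is_split_grading_def)
    then show ?thesis using da db dc by auto
  qed
  define J' where "J' = TZ_gen S"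
  have J'E: "J' = TZ_E deg'" using assms(8) by (simp add: J'_def)
  have J'ffin: "J' \<subseteq> {f. ffin f}" unfolding J'E TZ_E_def by blast
  have J'T: "is_TZ_ideal J'"
  proof -
    have "\<exists>I. is_TZ_ideal I \<and> S \<subseteq> I"
    proof (rule ccontr)
      assume "\<not> (\<exists>I. is_TZ_ideal I \<and> S \<subseteq> I)"
      then have "J' = UNIV" by (auto simp: J'_def TZ_gen_def)
      then have "ffin (\<lambda>_. 1 :: 'a)" using J'ffin by auto
      then show False by (simp add: ffin_def fsupp_def infinite_UNIV_listI)
    qed
    then show ?thesis unfolding J'_def by (rule TZ_gen_is)
  qed
  have SJ': "S \<subseteq> J'" unfolding J'_def by (rule TZ_gen_sub)
  define P where "P = (\<lambda>f. Psi d (Phi d f)) ` S"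
  define N :: "'a fpoly set" where "N = {fvar (i, m) | i m. \<not> d dvd m}"
  have kill: "\<phi> x = (\<lambda>_. 0)" if "\<forall>x. grass_elem (\<phi> x) \<and> ghomog deg (snd x) (\<phi> x)" "\<not> d dvd snd x"
    for \<phi> :: "gvar \<Rightarrow> 'a grass" and x
  proof (rule ext)
    fix A show "\<phi> x A = 0"
    proof (rule ccontr)
      assume "\<phi> x A \<noteq> 0"
      moreover have "ghomog deg (snd x) (\<phi> x)" using that(1) by blast
      ultimately have "(\<Sum>i\<in>A. deg i) = snd x" by (simp add: ghomog_def)
      moreover have "d dvd (\<Sum>i\<in>A. deg i)" by (rule dvd_sum) (rule ddeg)
      ultimately show False using that(2) by simp
    qed
  qed
  define K where "K = {f. ffin f \<and> unPhi d f \<in> J'}"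
  have KT: "is_TZ_ideal K"
  proof -
    have JI: "is_ideal J'" using J'T by (simp add: is_TZ_ideal_def)
    have "is_ideal K"
      unfolding is_ideal_def
    proof (intro conjI ballI allI impI)
      show "K \<subseteq> {f. ffin f}" by (auto simp: K_def)
      show "(\<lambda>_. 0) \<in> K" using JI by (simp add: K_def ffin_zero unPhi_zero is_ideal_def)
      fix p assume p: "p \<in> K"
      { fix q assume "q \<in> K"
        then show "fadd p q \<in> K" using p JI by (simp add: K_def ffin_fadd unPhi_fadd is_ideal_def) }
      { fix c show "fsmult c p \<in> K" using p JI by (simp add: K_def ffin_fsmult unPhi_fsmult is_ideal_def) }
      { fix q :: "'a fpoly" assume q: "ffin q"
        then have uq: "ffin (unPhi d q)" using d0 by (simp add: ffin_unPhi)
        show "fmult q p \<in> K" using p q uq JI by (simp add: K_def ffin_fmult unPhi_fmult is_ideal_def)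
        show "fmult p q \<in> K" using p q uq JI by (simp add: K_def ffin_fmult unPhi_fmult is_ideal_def) }
    qed
    moreover have "fsubst s f \<in> K" if s: "graded_endo_subst s" and f: "f \<in> K" for s f
    proof -
      have ff: "ffin f" "unPhi d f \<in> J'" using f by (auto simp: K_def)
      have "ffin (fsubst s f)" using ffin_fsubst[OF _ ff(1)] graded_endo_substD[OF s] by blast
      moreover have "unPhi d (fsubst s f) \<in> J'"
        using unPhi_fsubst[OF d0 s ff(1)] graded_unPhi[OF s d0] ff(2) J'T
        by (simp add: is_TZ_ideal_def)
      ultimately show ?thesis by (simp add: K_def)
    qed
    ultimately show ?thesis by (simp add: is_TZ_ideal_def)
  qed
  have GK: "P \<union> N \<subseteq> K"
  proof
    fix f assume "f \<in> P \<union> N"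
    then show "f \<in> K"
    proof
      assume "f \<in> P"
      then obtain g where g: "g \<in> S" "f = Phi d g" by (auto simp: P_def Psi_def)
      have "ffin g" using g(1) SJ' J'ffin by auto
      then show "f \<in> K" using g SJ' d0 by (auto simp: K_def ffin_Phi unPhi_Phi)
    next
      assume "f \<in> N"
      then obtain i m where im: "f = fvar (i, m)" "\<not> d dvd m" by (auto simp: N_def)
      have "unPhi d f = (\<lambda>_. 0)"
      proof -
        have "fhomog m (fvar (i, m) :: 'a fpoly)" using fvar_homog[of "(i, m)"] by simp
        then show ?thesis using unPhi_bad_homog[OF _ im(2)] im(1) by blast
      qed
      moreover have "(\<lambda>_. 0) \<in> J'" using J'T by (simp add: is_TZ_ideal_def is_ideal_def)
      ultimately show "f \<in> K" using im(1) by (simp add: K_def ffin_fvar)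
    qed
  qed
  have KE: "K \<subseteq> TZ_E deg"
  proof
    fix f assume "f \<in> K"
    then have ff: "ffin f" "unPhi d f \<in> TZ_E deg'" using J'E by (auto simp: K_def)
    have "geval \<phi> f = (\<lambda>_. 0)" if \<phi>: "\<forall>x. grass_elem (\<phi> x) \<and> ghomog deg (snd x) (\<phi> x)" for \<phi>
    proof -
      have e1: "geval \<phi> f = geval (\<phi> \<circ> mulv d) (unPhi d f)"
        by (rule geval_unPhi[OF d0 ff(1)]) (rule kill[OF \<phi>])
      have gr2: "\<forall>x. grass_elem (gtr \<tau> ((\<phi> \<circ> mulv d) x)) \<and> ghomog deg' (snd x) (gtr \<tau> ((\<phi> \<circ> mulv d) x))"
      proof
        fix x
        have h: "grass_elem (\<phi> (mulv d x))" "ghomog deg (d * snd x) (\<phi> (mulv d x))"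
          using \<phi> by (metis snd_mulv)+
        have "ghomog deg' (snd x) (gtr \<tau> (\<phi> (mulv d x)))"
          by (rule gtr_ghomog[OF bt tdeg _ d0 h(2)]) simp
        then show "grass_elem (gtr \<tau> ((\<phi> \<circ> mulv d) x)) \<and> ghomog deg' (snd x) (gtr \<tau> ((\<phi> \<circ> mulv d) x))"
          using gtr_grass_elem[OF bt h(1)] by simp
      qed
      have "geval (\<lambda>x. gtr \<tau> ((\<phi> \<circ> mulv d) x)) (unPhi d f) = (\<lambda>_. 0)"
        using ff(2) gr2 by (simp add: TZ_E_def)
      then have "gtr \<tau> (geval (\<phi> \<circ> mulv d) (unPhi d f)) = (\<lambda>_. 0)"
        by (simp add: gtr_geval[OF bt])
      then have "geval (\<phi> \<circ> mulv d) (unPhi d f) = (\<lambda>_. 0)" by (rule gtr_zero_imp[OF bt])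
      then show ?thesis using e1 by simp
    qed
    then show "f \<in> TZ_E deg" using ff(1) by (simp add: TZ_E_def)
  qed
  have sub1: "TZ_gen (P \<union> N) \<subseteq> TZ_E deg"
    using TZ_gen_least[OF KT GK] KE by blast
  have sub2: "TZ_E deg \<subseteq> TZ_gen (P \<union> N)"
  proof
    fix f :: "'a fpoly" assume fE: "f \<in> TZ_E deg"
    have ff: "ffin f" using fE by (simp add: TZ_E_def)
    define g where "g = unPhi d f"
    have gE: "g \<in> TZ_E deg'"
    proof -
      have "geval \<phi>' g = (\<lambda>_. 0)" if \<phi>': "\<forall>x. grass_elem (\<phi>' x) \<and> ghomog deg' (snd x) (\<phi>' x)" for \<phi>'
      proof -
        define \<phi> where "\<phi> = (\<lambda>x. if d dvd snd x then gtr \<sigma> (\<phi>' (umv d x)) else (\<lambda>_. 0))"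
        have gr1: "\<forall>x. grass_elem (\<phi> x) \<and> ghomog deg (snd x) (\<phi> x)"
        proof
          fix x
          show "grass_elem (\<phi> x) \<and> ghomog deg (snd x) (\<phi> x)"
          proof (cases "d dvd snd x")
            case True
            have h: "grass_elem (\<phi>' (umv d x))" "ghomog deg' (snd x div d) (\<phi>' (umv d x))"
              using \<phi>' by (metis snd_umv)+
            have "ghomog deg (snd x) (gtr \<sigma> (\<phi>' (umv d x)))"
              by (rule gtr_ghomog[where rB=1 and rA=d, OF bs _ _ _ h(2)]) (use sdeg True in simp_all)
            then show ?thesis using True gtr_grass_elem[OF bs h(1)] by (simp add: \<phi>_def)
          next
            case False
            then show ?thesis by (simp add: \<phi>_def ghomog_zero grass_elem_zero)
          qed
        qed
        have "geval \<phi> f = (\<lambda>_. 0)" using fE gr1 by (simp add: TZ_E_def)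
        moreover have "geval \<phi> f = geval (\<phi> \<circ> mulv d) g"
          unfolding g_def by (rule geval_unPhi[OF d0 ff]) (simp add: \<phi>_def)
        moreover have "\<phi> \<circ> mulv d = (\<lambda>x. gtr \<sigma> (\<phi>' x))"
          using d0 by (simp add: \<phi>_def comp_def)
        ultimately have "gtr \<sigma> (geval \<phi>' g) = (\<lambda>_. 0)"
          by (simp add: gtr_geval[OF bs])
        then show ?thesis by (rule gtr_zero_imp[OF bs])
      qed
      moreover have "ffin g" unfolding g_def using d0 ff by (simp add: ffin_unPhi)
      ultimately show ?thesis by (simp add: TZ_E_def)
    qed
    show "f \<in> TZ_gen (P \<union> N)"
      unfolding TZ_gen_def
    proof (rule InterI)
      fix I assume "I \<in> {I. is_TZ_ideal I \<and> P \<union> N \<subseteq> I}"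
      then have IT: "is_TZ_ideal I" and GI: "P \<union> N \<subseteq> I" by auto
      have II: "is_ideal I" using IT by (simp add: is_TZ_ideal_def)
      define J where "J = {g. ffin g \<and> Phi d g \<in> I}"
      have JT: "is_TZ_ideal J"
      proof -
        have "is_ideal J"
          unfolding is_ideal_def
        proof (intro conjI ballI allI impI)
          show "J \<subseteq> {f. ffin f}" by (auto simp: J_def)
          show "(\<lambda>_. 0) \<in> J" using II by (simp add: J_def ffin_zero Phi_zero is_ideal_def)
          fix p assume p: "p \<in> J"
          { fix q assume "q \<in> J"
            then show "fadd p q \<in> J" using p II by (simp add: J_def ffin_fadd Phi_fadd is_ideal_def) }
          { fix c show "fsmult c p \<in> J" using p II by (simp add: J_def ffin_fsmult Phi_fsmult is_ideal_def) }
          { fix q :: "'a fpoly" assume q: "ffin q"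
            then have uq: "ffin (Phi d q)" using d0 by (simp add: ffin_Phi)
            show "fmult q p \<in> J" using p q uq II by (simp add: J_def ffin_fmult Phi_fmult is_ideal_def)
            show "fmult p q \<in> J" using p q uq II by (simp add: J_def ffin_fmult Phi_fmult is_ideal_def) }
        qed
        moreover have "fsubst s h \<in> J" if s: "graded_endo_subst s" and h: "h \<in> J" for s h
        proof -
          have hh: "ffin h" "Phi d h \<in> I" using h by (auto simp: J_def)
          have "ffin (fsubst s h)" using ffin_fsubst[OF _ hh(1)] graded_endo_substD[OF s] by blast
          moreover have "Phi d (fsubst s h) \<in> I"
            using Phi_fsubst[OF d0 hh(1), of s] graded_Phi_subst[OF s d0] hh(2) IT
            by (simp add: is_TZ_ideal_def)
          ultimately show ?thesis by (simp add: J_def)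
        qed
        ultimately show ?thesis by (simp add: is_TZ_ideal_def)
      qed
      have SJ: "S \<subseteq> J"
      proof
        fix h assume "h \<in> S"
        then have "ffin h" "Phi d h \<in> P" using SJ' J'ffin by (auto simp: P_def Psi_def)
        then show "h \<in> J" using GI by (auto simp: J_def)
      qed
      have "g \<in> J" using TZ_gen_least[OF JT SJ] gE assms(8) by blast
      then have PgI: "Phi d g \<in> I" by (simp add: J_def)
      define W where "W = {w \<in> fsupp f. \<not> good d w}"
      have finW: "finite W" using ff by (simp add: W_def ffin_def)
      have monoI: "fmono w \<in> I" if wW: "w \<in> W" for w
      proof -
        obtain x where x: "x \<in> set w" "\<not> d dvd snd x" using wW unfolding W_def good_def by blast
        then obtain u v where w: "w = u @ x # v" by (meson split_list)
        obtain i0 m0 where x0: "x = (i0, m0)" by (cases x)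
        have "fvar (i0, m0) \<in> N" using x(2) x0 unfolding N_def by auto
        then have "fvar x \<in> N" using x0 by simp
        then have "fvar x \<in> I" using GI by blast
        moreover have fu: "ffin (fmono u :: 'a fpoly)" "ffin (fmono v :: 'a fpoly)" by (rule ffin_fmono)+
        ultimately have "fmult (fmono u) (fvar x) \<in> I" using ideal_multL[OF II] by blast
        then have "fmult (fmult (fmono u) (fvar x)) (fmono v) \<in> I" using ideal_multR[OF II _ fu(2)] by blast
        then show ?thesis by (simp add: w fvar_def fmult_fmono)
      qed
      have fbI: "(\<lambda>u. \<Sum>w\<in>W. f w * fmono w u) \<in> I"
        by (rule ideal_sum[OF II finW monoI])
      have fb: "(\<lambda>u. \<Sum>w\<in>W. f w * fmono w u) = (\<lambda>u. if good d u then 0 else f u)"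
      proof
        fix u
        have "(\<Sum>w\<in>W. f w * fmono w u) = (\<Sum>w\<in>W. if w = u then f w else 0)"
          by (rule sum.cong) (auto simp: fmono_def)
        also have "\<dots> = (if u \<in> W then f u else 0)" using finW by (simp add: sum.delta)
        also have "\<dots> = (if good d u then 0 else f u)" by (auto simp: W_def fsupp_def)
        finally show "(\<Sum>w\<in>W. f w * fmono w u) = (if good d u then 0 else f u)" .
      qed
      have "f = fadd (Phi d g) (\<lambda>u. \<Sum>w\<in>W. f w * fmono w u)"
        unfolding fb
      proof
        fix u show "f u = fadd (Phi d g) (\<lambda>u. if good d u then 0 else f u) u"
          by (auto simp: fadd_def Phi_alt g_def unPhi_def map_mulv_umv)
      qed
      then show "f \<in> I" using ideal_add[OF II PgI fbI] by simp
    qed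
  qed
  show ?thesis using sub1 sub2 unfolding P_def N_def d_def by blast
qed

end
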